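(* Let $\gamma\ge2$ be an integer, $\varepsilon\ge0$, and $P_0$ a probability measure on $\mathbb{R}^n$. For $P\in N_\gamma(P_0)$ define: (i) $\mathbf{Q}^\star_\varepsilon(P)$ as the probability measure $Q\ll P_0$ with $\frac{dQ}{dP_0}(x)=\mathrm{clip}\big(\frac1{r_P}\frac{dP}{dP_0}(x);\frac{\gamma+1}{\gamma+e^\varepsilon},\frac{(\gamma+1)e^\varepsilon}{\gamma+e^\varepsilon}\big)$, where $r_P>0$ is chosen so that $Q$ has total mass $1$; (ii) $\mathbf{Q}^\star_{g_\varepsilon}(P)=\lambda P+(1-\lambda)P_0$ with $\lambda=\frac{e^\varepsilon-1}{(1-\frac1\gamma)e^\varepsilon+\gamma-1}=\frac{\gamma(e^\varepsilon-1)}{(\gamma-1)(e^\varepsilon+\gamma)}$. Then for every $f$-divergence $D_f$ and every $P\in N_\gamma(P_0)$, $D_f(P\|\mathbf{Q}^\star_\varepsilon(P))\le D_f(P\|\mathbf{Q}^\star_{g_\varepsilon}(P))$.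
   Context: $\mathrm{clip}(x;s_1,s_2)=\max\{s_1,\min\{s_2,x\}\}$. For $\gamma\ge1$, $E_\gamma(P\|Q)=\mathbb{E}_Q[\max\{\frac{dP}{dQ}-\gamma,0\}]$ and $N_\gamma(P_0)=\{P:E_\gamma(P\|P_0)=E_\gamma(P_0\|P)=0\}$, equivalently the $P\ll P_0$ with $\frac1\gamma\le\frac{dP}{dP_0}\le\gamma$. $D_f(P\|Q)=\int qf(p/q)\,d\nu$ for convex $f:(0,\infty)\to\mathbb{R}$ with $f(1)=0$, densities w.r.t. a dominating measure $\nu$, conventions $f(0)=\lim_{t\to0^+}f(t)$, $0f(0/0)=0$, $0f(a/0)=a\lim_{u\to\infty}f(u)/u$. (In the paper these two maps are, on $N_\gamma(P_0)$, the locally minimax-optimal $\varepsilon$-LDP sampler and the locally minimax-optimal $g_\varepsilon$-FLDP mixture sampler.) *)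

theory Defs
  imports "HOL-Probability.Probability"
begin

definition clip :: "real \<Rightarrow> real \<Rightarrow> real \<Rightarrow> real" where
  "clip x s1 s2 = max s1 (min s2 x)"

definition dens :: "'a measure \<Rightarrow> 'a measure \<Rightarrow> 'a \<Rightarrow> real" where
  "dens P0 P x = enn2real (RN_deriv P0 P x)"

definition N_gamma :: "real \<Rightarrow> 'a measure \<Rightarrow> 'a measure set" where
  "N_gamma \<gamma> P0 = {P. prob_space P \<and> sets P = sets P0 \<and> absolutely_continuous P0 P \<and>
     (AE x in P0. ennreal (1 / \<gamma>) \<le> RN_deriv P0 P x \<and> RN_deriv P0 P x \<le> ennreal \<gamma>)}"

text \<open>Density dQ/dP0 of Q*_eps(P) for a given normalising constant r.\<close>
definition ldp_dens :: "real \<Rightarrow> real \<Rightarrow> real \<Rightarrow> ('a \<Rightarrow> real) \<Rightarrow> 'a \<Rightarrow> real" where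
  "ldp_dens \<gamma> \<epsilon> r p x =
     clip (p x / r) ((\<gamma> + 1) / (\<gamma> + exp \<epsilon>)) ((\<gamma> + 1) * exp \<epsilon> / (\<gamma> + exp \<epsilon>))"

text \<open>Mixing weight lambda and density dQ/dP0 of Q*_{g_eps}(P) = lambda P + (1 - lambda) P0.\<close>
definition mix_weight :: "real \<Rightarrow> real \<Rightarrow> real" where
  "mix_weight \<gamma> \<epsilon> = (exp \<epsilon> - 1) / ((1 - 1 / \<gamma>) * exp \<epsilon> + \<gamma> - 1)"

definition fldp_dens :: "real \<Rightarrow> real \<Rightarrow> ('a \<Rightarrow> real) \<Rightarrow> 'a \<Rightarrow> real" where
  "fldp_dens \<gamma> \<epsilon> p x = mix_weight \<gamma> \<epsilon> * p x + (1 - mix_weight \<gamma> \<epsilon>)"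

definition f_zero :: "(real \<Rightarrow> real) \<Rightarrow> ereal" where
  "f_zero f = Lim (at_right 0) (\<lambda>t. ereal (f t))"

definition f_slope_inf :: "(real \<Rightarrow> real) \<Rightarrow> ereal" where
  "f_slope_inf f = Lim at_top (\<lambda>u. ereal (f u / u))"

definition fdiv_integrand :: "(real \<Rightarrow> real) \<Rightarrow> real \<Rightarrow> real \<Rightarrow> ereal" where
  "fdiv_integrand f p q =
     (if 0 < q then (if 0 < p then ereal (q * f (p / q)) else ereal q * f_zero f)
      else (if 0 < p then ereal p * f_slope_inf f else 0))"

definition fdiv :: "(real \<Rightarrow> real) \<Rightarrow> 'a measure \<Rightarrow> ('a \<Rightarrow> real) \<Rightarrow> ('a \<Rightarrow> real) \<Rightarrow> ereal" where
  "fdiv f \<nu> p q =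
     enn2ereal (\<integral>\<^sup>+ x. e2ennreal (fdiv_integrand f (p x) (q x)) \<partial>\<nu>)
     - enn2ereal (\<integral>\<^sup>+ x. e2ennreal (- fdiv_integrand f (p x) (q x)) \<partial>\<nu>)"

end

theory Submission
  imports Defs
begin

lemma cvx3:
  fixes F :: "real \<Rightarrow> real"
  assumes "convex_on {0<..} F" "0 < x" "x < y" "y < z"
  shows "F y \<le> ((z - y) * F x + (y - x) * F z) / (z - x)"
proof -
  define \<mu> where "\<mu> = (z - y) / (z - x)"
  have m: "0 \<le> \<mu>" "\<mu> \<le> 1" using assms by (auto simp: \<mu>_def field_simps)
  have "F (\<mu> *\<^sub>R x + (1 - \<mu>) *\<^sub>R z) \<le> \<mu> * F x + (1 - \<mu>) * F z"
    using assms(1) m assms(2-4) unfolding convex_on_alt by auto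
  moreover have "\<mu> *\<^sub>R x + (1 - \<mu>) *\<^sub>R z = y"
  proof -
    have e: "(z-y)*x + (y-x)*z = y*(z-x)" by (simp add: algebra_simps)
    have "1 - \<mu> = (y - x) / (z - x)" using assms by (simp add: \<mu>_def field_simps)
    then have "\<mu> *\<^sub>R x + (1 - \<mu>) *\<^sub>R z = ((z-y)*x + (y-x)*z) / (z-x)"
      by (simp add: \<mu>_def add_divide_distrib)
    also have "\<dots> = y" using e assms by simp
    finally show ?thesis .
  qed
  moreover have "\<mu> * F x + (1 - \<mu>) * F z = ((z - y) * F x + (y - x) * F z) / (z - x)"
  proof -
    have "1 - \<mu> = (y - x) / (z - x)" using assms by (simp add: \<mu>_def field_simps)
    then show ?thesis by (simp add: \<mu>_def add_divide_distrib)
  qed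
  ultimately show ?thesis by simp
qed

lemma subgrad:
  fixes f :: "real \<Rightarrow> real"
  assumes "convex_on {0<..} f" "0 < r"
  obtains m where "\<And>t. 0 < t \<Longrightarrow> f r + m * (t - r) \<le> f t"
proof -
  define S where "S = (\<lambda>s. (f r - f s) / (r - s)) ` {0<..<r}"
  have slope: "(f r - f s) / (r - s) \<le> (f t - f r) / (t - r)" if "0 < s" "s < r" "r < t" for s t
  proof -
    have a: "(f s - f r) / (s - r) \<le> (f s - f t) / (s - t)"
      using convex_on_slope_le(1)[OF assms(1), of s t r] that by auto
    have b: "(f s - f t) / (s - t) \<le> (f r - f t) / (r - t)"
      using convex_on_slope_le(2)[OF assms(1), of s t r] that by auto
    have "(f r - f s) / (r - s) = (f s - f r) / (s - r)" by (metis minus_diff_eq minus_divide_divide)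
    moreover have "(f t - f r) / (t - r) = (f r - f t) / (r - t)"
      by (metis minus_diff_eq minus_divide_divide)
    ultimately show ?thesis using a b by linarith
  qed
  have ne: "S \<noteq> {}" using assms(2) by (auto simp: S_def)
  have bdd: "bdd_above S"
    unfolding S_def bdd_above_def using slope[of _ "r+1"] assms(2)
    by (auto intro!: exI[of _ "f (r + 1) - f r"])
  define m where "m = Sup S"
  show ?thesis
  proof (rule that)
    fix t :: real assume t: "0 < t"
    consider "t < r" | "t = r" | "r < t" by linarith
    then show "f r + m * (t - r) \<le> f t"
    proof cases
      case 1
      have "(f r - f t) / (r - t) \<le> m" unfolding m_def
        by (rule cSup_upper[OF _ bdd]) (use t 1 in \<open>auto simp: S_def\<close>)
      then have "f r - f t \<le> m * (r - t)" using 1 by (simp add: divide_le_eq)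
      then show ?thesis by (simp add: algebra_simps)
    next
      case 2 then show ?thesis by simp
    next
      case 3
      have "m \<le> (f t - f r) / (t - r)" unfolding m_def
        by (rule cSup_least[OF ne]) (use slope 3 in \<open>auto simp: S_def\<close>)
      then have "m * (t - r) \<le> f t - f r" using 3 by (simp add: le_divide_eq)
      then show ?thesis by simp
    qed
  qed
qed

lemma pointwise:
  fixes f :: "real \<Rightarrow> real"
  assumes cf: "convex_on {0<..} f" and r: "0 < r"
    and m: "\<And>t. 0 < t \<Longrightarrow> f r + m * (t - r) \<le> f t"
    and p: "0 < p" and a: "0 < a" and ab: "a \<le> b" and q2: "a \<le> q2" "q2 \<le> b"
    and q1: "q1 = clip (p / r) a b"
  shows "(q2 - q1) * (f r - m * r) \<le> q2 * f (p / q2) - q1 * f (p / q1)"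
proof -
  define F where "F t = f t - f r - m * (t - r)" for t
  have F0: "F r = 0" by (simp add: F_def)
  have Fnn: "0 \<le> F t" if "0 < t" for t using m[OF that] by (simp add: F_def)
  have cF: "convex_on {0<..} F"
  proof (rule convex_onI)
    fix t x y :: real assume t: "0 < t" "t < 1" and xy: "x \<in> {0<..}" "y \<in> {0<..}"
    have "f ((1 - t) *\<^sub>R x + t *\<^sub>R y) \<le> (1 - t) * f x + t * f y"
      using convex_onD[OF cf, of t x y] t xy by simp
    then show "F ((1 - t) *\<^sub>R x + t *\<^sub>R y) \<le> (1 - t) * F x + t * F y"
      by (simp add: F_def algebra_simps)
  qed (simp add: convex_real_interval)
  have tr: "q * F (p / q) = q * f (p / q) - (q * (f r - m * r)) - m * p" if "0 < q" for q
    using that by (simp add: F_def algebra_simps)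
  have q2p: "0 < q2" using a q2 by simp
  have key: "q1 * F (p / q1) \<le> q2 * F (p / q2)"
  proof -
    consider "p / r \<le> a" | "a < p / r" "p / r < b" | "b \<le> p / r" using ab by linarith
    then show ?thesis
    proof cases
      case 1
      then have q1a: "q1 = a" using q1 ab by (simp add: clip_def)
      define u where "u = p / a"
      define v where "v = p / q2"
      have vu: "v \<le> u" unfolding u_def v_def using q2 a p by (simp add: frac_le)
      have ur: "u \<le> r" unfolding u_def using 1 a r by (simp add: divide_le_eq mult.commute)
      have v0: "0 < v" using p q2p by (simp add: v_def)
      have "F u \<le> F v"
      proof (cases "v = u")
        case False
        then have vu': "v < u" using vu by simp
        show ?thesis
        proof (cases "u = r")
          case True then show ?thesis using F0 Fnn[OF v0] by simp
        next
          case False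
          then have "u < r" using ur by simp
          from cvx3[OF cF v0 vu' this] have "F u \<le> ((r - u) * F v + (u - v) * F r) / (r - v)" .
          also have "\<dots> = (r - u) / (r - v) * F v" using F0 by simp
          also have "\<dots> \<le> 1 * F v"
            using Fnn[OF v0] vu' \<open>u < r\<close> by (intro mult_right_mono) (auto simp: divide_le_eq)
          finally show ?thesis by simp
        qed
      qed simp
      then have "a * F u \<le> a * F v" using a by (intro mult_left_mono) simp_all
      also have "\<dots> \<le> q2 * F v" using q2(1) Fnn[OF v0] by (rule mult_right_mono)
      finally have "a * F u \<le> q2 * F v" .
      then show ?thesis using q1a by (simp add: u_def v_def)
    next
      case 2
      then have "q1 = p / r" using q1 by (simp add: clip_def)
      then have "p / q1 = r" using p r by simp
      then show ?thesis using F0 Fnn q2p p by (simp add: \<open>q1 = p / r\<close>)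
    next
      case 3
      then have q1b: "q1 = b" using q1 ab by (simp add: clip_def)
      have b0: "0 < b" using a ab by simp
      define u where "u = p / b"
      define v where "v = p / q2"
      have uv: "u \<le> v" unfolding u_def v_def using q2 q2p p by (simp add: frac_le)
      have ru: "r \<le> u" unfolding u_def using 3 b0 r by (simp add: le_divide_eq mult.commute)
      have v0: "0 < v" using p q2p by (simp add: v_def)
      have "b * F u \<le> q2 * F v"
      proof (cases "u = r")
        case True then show ?thesis using F0 Fnn[OF v0] q2p by simp
      next
        case False
        then have ru': "r < u" using ru by simp
        show ?thesis
        proof (cases "u = v")
          case True
          then have "b = q2" using p b0 q2p by (simp add: u_def v_def)
          then show ?thesis using True by simp
        next
          case False
          then have uv': "u < v" using uv by simp
          from cvx3[OF cF r ru' uv'] have "F u \<le> ((v - u) * F r + (u - r) * F v) / (v - r)" .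
          also have "\<dots> = (u - r) / (v - r) * F v" using F0 by simp
          finally have "F u \<le> (u - r) / (v - r) * F v" .
          then have "b * F u \<le> b * ((u - r) / (v - r) * F v)" using b0 by (intro mult_left_mono) simp_all
          then have "b * F u \<le> b * ((u - r) / (v - r)) * F v" by (simp add: mult.assoc)
          also have "\<dots> \<le> q2 * F v"
          proof (rule mult_right_mono[OF _ Fnn[OF v0]])
            have "b * (u - r) \<le> q2 * (v - r)"
              using b0 q2p q2 r p by (simp add: u_def v_def algebra_simps mult_right_mono)
            then show "b * ((u - r) / (v - r)) \<le> q2"
              using ru' uv' by (simp add: divide_le_eq mult.commute)
          qed
          finally show ?thesis .
        qed
      qed
      then show ?thesis using q1b by (simp add: u_def v_def)
    qed
  qed
  have q1p: "0 < q1" using q1 a ab by (simp add: clip_def)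
  show ?thesis using key tr[OF q1p] tr[OF q2p] by (simp add: algebra_simps)
qed

lemma clip_id: "lo \<le> t \<Longrightarrow> t \<le> hi \<Longrightarrow> clip t lo hi = t"
  by (simp add: clip_def)

lemma clip_range: "lo \<le> hi \<Longrightarrow> clip t lo hi \<in> {lo..hi}"
  by (simp add: clip_def)

lemma fdiv_real:
  fixes M :: "'a measure" and p q :: "'a \<Rightarrow> real" and f :: "real \<Rightarrow> real"
  assumes fm: "finite_measure M"
    and pm: "p \<in> borel_measurable M" and qm: "q \<in> borel_measurable M"
    and fc: "continuous_on {lo..hi} f" and lohi: "lo \<le> hi"
    and ae: "AE x in M. 0 < q x \<and> q x \<le> B \<and> 0 < p x \<and> lo \<le> p x / q x \<and> p x / q x \<le> hi"
  shows "integrable M (\<lambda>x. q x * f (clip (p x / q x) lo hi))"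
    and "fdiv f M p q = ereal (integral\<^sup>L M (\<lambda>x. q x * f (clip (p x / q x) lo hi)))"
proof -
  define G where "G x = q x * f (clip (p x / q x) lo hi)" for x
  have cc: "continuous_on UNIV (\<lambda>t. f (clip t lo hi))"
  proof (rule continuous_on_compose2[OF fc])
    show "continuous_on UNIV (\<lambda>t. clip t lo hi)" unfolding clip_def
      by (intro continuous_intros)
    show "(\<lambda>t. clip t lo hi) ` UNIV \<subseteq> {lo..hi}" using clip_range[OF lohi] by auto
  qed
  have fcm: "(\<lambda>t. f (clip t lo hi)) \<in> borel_measurable borel"
    by (rule borel_measurable_continuous_onI[OF cc])
  have Gm: "G \<in> borel_measurable M"
    unfolding G_def
    by (intro borel_measurable_times qm measurable_compose[OF _ fcm] borel_measurable_divide pm)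
  have "compact (f ` {lo..hi})" by (intro compact_continuous_image fc) simp
  then obtain K where K: "\<And>y. y \<in> f ` {lo..hi} \<Longrightarrow> norm y \<le> K"
    using compact_imp_bounded[of "f ` {lo..hi}"] unfolding bounded_iff by blast
  have fK: "\<bar>f (clip t lo hi)\<bar> \<le> K" for t using K clip_range[OF lohi] by force
  have "AE x in M. norm (G x) \<le> B * K"
    using ae
  proof eventually_elim
    case (elim x)
    have "norm (G x) = q x * \<bar>f (clip (p x / q x) lo hi)\<bar>" using elim by (simp add: G_def abs_mult)
    also have "\<dots> \<le> B * K" using elim fK by (intro mult_mono) (auto intro: order.trans[OF abs_ge_zero])
    finally show ?case .
  qed
  then have Gi': "integrable M G" by (rule finite_measure.integrable_const_bound[OF fm _ Gm])
  then show Gi: "integrable M (\<lambda>x. q x * f (clip (p x / q x) lo hi))"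
    by (simp add: G_def[abs_def])
  have aeG: "AE x in M. fdiv_integrand f (p x) (q x) = ereal (G x)"
    using ae by eventually_elim (simp add: fdiv_integrand_def G_def clip_id)
  have i1: "(\<integral>\<^sup>+ x. e2ennreal (fdiv_integrand f (p x) (q x)) \<partial>M) = (\<integral>\<^sup>+ x. ennreal (G x) \<partial>M)"
    by (rule nn_integral_cong_AE) (use aeG in eventually_elim; simp)
  have i2: "(\<integral>\<^sup>+ x. e2ennreal (- fdiv_integrand f (p x) (q x)) \<partial>M) = (\<integral>\<^sup>+ x. ennreal (- G x) \<partial>M)"
    by (rule nn_integral_cong_AE) (use aeG in eventually_elim; simp)
  have fin: "(\<integral>\<^sup>+ x. ennreal (norm (G x)) \<partial>M) < \<infinity>" using Gi' by (simp add: integrable_iff_bounded)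
  have f1: "(\<integral>\<^sup>+ x. ennreal (G x) \<partial>M) < \<infinity>"
    by (rule le_less_trans[OF nn_integral_mono fin]) (simp add: ennreal_leI)
  have f2: "(\<integral>\<^sup>+ x. ennreal (- G x) \<partial>M) < \<infinity>"
    by (rule le_less_trans[OF nn_integral_mono fin]) (simp add: ennreal_leI)
  have ee: "enn2ereal X = ereal (enn2real X)" if "X < \<infinity>" for X :: ennreal
  proof -
    from that obtain y where "X = ennreal y" "0 \<le> y" by (cases X) auto
    then show ?thesis by simp
  qed
  show "fdiv f M p q = ereal (integral\<^sup>L M (\<lambda>x. q x * f (clip (p x / q x) lo hi)))"
  proof -
    have "fdiv f M p q = enn2ereal (\<integral>\<^sup>+ x. ennreal (G x) \<partial>M) - enn2ereal (\<integral>\<^sup>+ x. ennreal (- G x) \<partial>M)"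
      unfolding fdiv_def i1 i2 ..
    also have "\<dots> = ereal (enn2real (\<integral>\<^sup>+ x. ennreal (G x) \<partial>M)) - ereal (enn2real (\<integral>\<^sup>+ x. ennreal (- G x) \<partial>M))"
      by (simp only: ee[OF f1] ee[OF f2])
    also have "\<dots> = ereal (integral\<^sup>L M G)"
      using real_lebesgue_integral_def[OF Gi'] by simp
    finally show ?thesis by (simp add: G_def[abs_def])
  qed
qed

theorem proposition2:
  fixes P0 P :: "(real ^ 'n) measure" and \<gamma> :: nat and \<epsilon> r :: real
    and f :: "real \<Rightarrow> real"
  assumes "\<gamma> \<ge> 2" and "\<epsilon> \<ge> 0"
    and "prob_space P0" and "sets P0 = sets borel"
    and "P \<in> N_gamma (real \<gamma>) P0"
    and "convex_on {0<..} f" and "f 1 = 0"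
    and "r > 0"
    and "emeasure (density P0 (\<lambda>x. ennreal (ldp_dens (real \<gamma>) \<epsilon> r (dens P0 P) x))) (space P0) = 1"
  shows "fdiv f P0 (dens P0 P) (ldp_dens (real \<gamma>) \<epsilon> r (dens P0 P))
         \<le> fdiv f P0 (dens P0 P) (fldp_dens (real \<gamma>) \<epsilon> (dens P0 P))"
proof -
  interpret prob_space P0 by fact
  define g where "g = real \<gamma>"
  define e where "e = exp \<epsilon>"
  define a where "a = (g + 1) / (g + e)"
  define b where "b = (g + 1) * e / (g + e)"
  define lam where "lam = mix_weight g \<epsilon>"
  define p where "p = dens P0 P"
  define q1 where "q1 = ldp_dens g \<epsilon> r p"
  define q2 where "q2 = fldp_dens g \<epsilon> p"
  have g2: "2 \<le> g" using assms(1) by (simp add: g_def)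
  have e1: "1 \<le> e" using assms(2) by (simp add: e_def)
  have a0: "0 < a" using g2 e1 by (simp add: a_def)
  have ab: "a \<le> b" using g2 e1 by (simp add: a_def b_def divide_right_mono)
  have "0 \<le> 1 - 1 / g" using g2 by simp
  then have "0 \<le> (1 - 1 / g) * e" using e1 by simp
  then have den: "0 < (1 - 1 / g) * e + g - 1" using g2 by linarith
  have lam0: "0 \<le> lam" using e1 den
    by (simp add: lam_def mix_weight_def e_def[symmetric])
  have nz: "g \<noteq> 0" "g - 1 \<noteq> 0" "e + g \<noteq> 0" "g + e \<noteq> 0" using g2 e1 by auto
  have "(1 - 1 / g) * e + g - 1 = (g - 1) * (e + g) / g" using nz by (simp add: field_simps)
  then have lamv: "lam = g * (e - 1) / ((g - 1) * (e + g))"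
    by (simp add: lam_def mix_weight_def e_def[symmetric])
  have lg: "lam * (g - 1) = g * (e - 1) / (e + g)"
  proof -
    have "lam * (g - 1) = (g - 1) * (g * (e - 1)) / ((g - 1) * (e + g))" unfolding lamv by simp
    also have "\<dots> = g * (e - 1) / (e + g)" using nz(2) by (rule mult_divide_mult_cancel_left)
    finally show ?thesis .
  qed
  have "lam * (1 / g) + (1 - lam) = 1 - lam * (g - 1) / g" using nz by (simp add: field_simps)
  also have "\<dots> = 1 - (e - 1) / (e + g)" unfolding lg using nz by simp
  also have "\<dots> = a" unfolding a_def using nz by (simp add: field_simps)
  finally have lam_lo: "lam * (1 / g) + (1 - lam) = a" .
  have "lam * g + (1 - lam) = 1 + lam * (g - 1)" by (simp add: algebra_simps)
  also have "\<dots> = b" unfolding lg b_def using nz by (simp add: field_simps)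
  finally have lam_hi: "lam * g + (1 - lam) = b" .
  have q1_def': "q1 x = clip (p x / r) a b" for x
    by (simp add: q1_def ldp_dens_def a_def b_def e_def)
  have q2_def': "q2 x = lam * p x + (1 - lam)" for x
    by (simp add: q2_def fldp_dens_def lam_def)
  have PN: "prob_space P" "sets P = sets P0" "absolutely_continuous P0 P"
    "AE x in P0. ennreal (1 / g) \<le> RN_deriv P0 P x \<and> RN_deriv P0 P x \<le> ennreal g"
    using assms(5) by (auto simp: N_gamma_def g_def)
  have aeRN: "AE x in P0. RN_deriv P0 P x = ennreal (p x) \<and> 1 / g \<le> p x \<and> p x \<le> g"
    using PN(4)
  proof eventually_elim
    case (elim x)
    have "RN_deriv P0 P x \<noteq> top" using neq_top_trans[OF ennreal_neq_top] elim by blast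
    then obtain y where y: "RN_deriv P0 P x = ennreal y" "0 \<le> y" by (cases "RN_deriv P0 P x") auto
    then have "p x = y" by (simp add: p_def dens_def)
    then show ?case using elim y g2 by (simp add: ennreal_le_iff)
  qed
  have aep: "AE x in P0. 1 / g \<le> p x \<and> p x \<le> g" using aeRN by auto
  have pm: "p \<in> borel_measurable P0" unfolding p_def dens_def by measurable
  have q1m: "q1 \<in> borel_measurable P0" unfolding q1_def ldp_dens_def clip_def using pm by measurable
  have q2m: "q2 \<in> borel_measurable P0" unfolding q2_def fldp_dens_def using pm by measurable
  have q1r: "a \<le> q1 x \<and> q1 x \<le> b" for x using clip_range[OF ab] by (simp add: q1_def')
  have aeq2: "AE x in P0. a \<le> q2 x \<and> q2 x \<le> b"
    using aep
  proof eventually_elim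
    case (elim x)
    have "lam * (1 / g) \<le> lam * p x" "lam * p x \<le> lam * g"
      using mult_left_mono[OF conjunct1[OF elim] lam0] mult_left_mono[OF conjunct2[OF elim] lam0] by auto
    then show ?case using lam_lo lam_hi by (simp add: q2_def')
  qed
  have pi: "integrable P0 p"
  proof (rule integrable_const_bound[where B=g])
    have g0: "0 < 1 / g" using g2 by simp
    show "AE x in P0. norm (p x) \<le> g" using aep
    proof eventually_elim
      case (elim x)
      then have "0 \<le> p x" using g0 by linarith
      then show ?case using elim by simp
    qed
  qed (rule pm)
  have "(\<integral>\<^sup>+ x. ennreal (p x) \<partial>P0) = (\<integral>\<^sup>+ x. RN_deriv P0 P x \<partial>P0)"
    by (rule nn_integral_cong_AE) (use aeRN in auto)
  also have "\<dots> = (\<integral>\<^sup>+ x. RN_deriv P0 P x * indicator (space P0) x \<partial>P0)"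
    by (rule nn_integral_cong) simp
  also have "\<dots> = emeasure (density P0 (RN_deriv P0 P)) (space P0)"
    by (rule emeasure_density[symmetric]) auto
  also have "\<dots> = emeasure P (space P)"
    using density_RN_deriv[OF PN(3,2)] sets_eq_imp_space_eq[OF PN(2)] by simp
  also have "\<dots> = 1" using prob_space.emeasure_space_1[OF PN(1)] .
  finally have pn1: "(\<integral>\<^sup>+ x. ennreal (p x) \<partial>P0) = 1" .
  have g0: "0 < 1 / g" using g2 by simp
  have pnn: "AE x in P0. 0 \<le> p x" using aep
  proof eventually_elim
    case (elim x)
    then show "0 \<le> p x" using g0 by linarith
  qed
  have "ennreal (integral\<^sup>L P0 p) = 1"
    using nn_integral_eq_integral[OF pi pnn] pn1 by simp
  then have int_p: "integral\<^sup>L P0 p = 1" by simp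
  have q1i: "integrable P0 q1"
  proof (rule integrable_const_bound[where B=b])
    show "AE x in P0. norm (q1 x) \<le> b"
    proof (intro AE_I2)
      fix x
      have "a \<le> q1 x" "q1 x \<le> b" using q1r by auto
      then show "norm (q1 x) \<le> b" using a0 by simp
    qed
  qed (rule q1m)
  have "(\<integral>\<^sup>+ x. ennreal (q1 x) \<partial>P0) = (\<integral>\<^sup>+ x. ennreal (q1 x) * indicator (space P0) x \<partial>P0)"
    by (rule nn_integral_cong) simp
  also have "\<dots> = emeasure (density P0 (\<lambda>x. ennreal (q1 x))) (space P0)"
    by (rule emeasure_density[symmetric]) (use q1m in auto)
  also have "\<dots> = 1" using assms(9) by (simp add: q1_def p_def g_def)
  finally have "(\<integral>\<^sup>+ x. ennreal (q1 x) \<partial>P0) = 1" .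
  then have "ennreal (integral\<^sup>L P0 q1) = 1"
  proof -
    note calculation = \<open>(\<integral>\<^sup>+ x. ennreal (q1 x) \<partial>P0) = 1\<close>
    have "AE x in P0. 0 \<le> q1 x" using q1r a0 by (intro AE_I2) (meson less_imp_le order.trans)
    then show ?thesis using nn_integral_eq_integral[OF q1i] calculation by simp
  qed
  then have int_q1: "integral\<^sup>L P0 q1 = 1" by simp
  have q2i: "integrable P0 q2" unfolding q2_def' using pi by simp
  have int_q2: "integral\<^sup>L P0 q2 = 1" unfolding q2_def' using pi int_p prob_space by simp
  define lo where "lo = (1 / g) / b"
  define hi where "hi = g / a"
  have b0: "0 < b" using a0 ab by simp
  have lo0: "0 < lo" using g2 b0 by (simp add: lo_def)
  have lohi: "lo \<le> hi"
  proof -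
    have "1 \<le> g * g" using mult_mono[of 1 g 1 g] g2 by simp
    then have "1 / g \<le> g" using g2 by (simp add: divide_le_eq)
    have "(1 / g) / b \<le> (1 / g) / a" by (rule divide_left_mono) (use g0 a0 ab in auto)
    also have "\<dots> \<le> g / a" by (rule divide_right_mono) (use \<open>1 / g \<le> g\<close> a0 in auto)
    finally show ?thesis by (simp add: lo_def hi_def)
  qed
  have ratio: "lo \<le> p x / q \<and> p x / q \<le> hi" if "1 / g \<le> p x" "p x \<le> g" "a \<le> q" "q \<le> b" for x q
  proof
    have px0: "0 \<le> p x" using that(1) g0 by linarith
    show "lo \<le> p x / q" unfolding lo_def by (rule frac_le[OF px0 that(1)]) (use that a0 in auto)
    show "p x / q \<le> hi" unfolding hi_def using that px0 g2 a0 by (intro frac_le) auto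
  qed
  have fc: "continuous_on {lo..hi} f"
    using convex_on_continuous[OF _ assms(6)] lo0 by (auto elim!: continuous_on_subset)
  have ae1: "AE x in P0. 0 < q1 x \<and> q1 x \<le> b \<and> 0 < p x \<and> lo \<le> p x / q1 x \<and> p x / q1 x \<le> hi"
    using aep
  proof eventually_elim
    case (elim x)
    have "0 < p x" using elim g0 by linarith
    moreover have "0 < q1 x" using q1r[of x] a0 by linarith
    ultimately show ?case using q1r[of x] ratio[of x "q1 x"] elim by auto
  qed
  have ae2: "AE x in P0. 0 < q2 x \<and> q2 x \<le> b \<and> 0 < p x \<and> lo \<le> p x / q2 x \<and> p x / q2 x \<le> hi"
    using aep aeq2
  proof eventually_elim
    case (elim x)
    have "0 < p x" using elim g0 by linarith
    moreover have "0 < q2 x" using elim a0 by linarith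
    ultimately show ?case using ratio[of x "q2 x"] elim by auto
  qed
  note F1 = fdiv_real[OF finite_measure_axioms pm q1m fc lohi ae1]
  note F2 = fdiv_real[OF finite_measure_axioms pm q2m fc lohi ae2]
  obtain m where m: "\<And>t. 0 < t \<Longrightarrow> f r + m * (t - r) \<le> f t" using subgrad[OF assms(6,8)] by blast
  define c where "c = f r - m * r"
  have ci: "integrable P0 (\<lambda>x. (q2 x - q1 x) * c)" using q1i q2i by simp
  have "integral\<^sup>L P0 (\<lambda>x. (q2 x - q1 x) * c) \<le>
      integral\<^sup>L P0 (\<lambda>x. q2 x * f (clip (p x / q2 x) lo hi) - q1 x * f (clip (p x / q1 x) lo hi))"
  proof (rule integral_mono_AE[OF ci])
    show "integrable P0 (\<lambda>x. q2 x * f (clip (p x / q2 x) lo hi) - q1 x * f (clip (p x / q1 x) lo hi))"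
      using F1(1) F2(1) by simp
    show "AE x in P0. (q2 x - q1 x) * c \<le> q2 x * f (clip (p x / q2 x) lo hi) - q1 x * f (clip (p x / q1 x) lo hi)"
      using ae1 ae2 aeq2
    proof eventually_elim
      case (elim x)
      then show ?case
        using pointwise[OF assms(6,8) m, of "p x" a b "q2 x" "q1 x"] a0 ab q1_def'
        by (simp add: clip_id c_def)
    qed
  qed
  then have "integral\<^sup>L P0 (\<lambda>x. q1 x * f (clip (p x / q1 x) lo hi)) \<le>
      integral\<^sup>L P0 (\<lambda>x. q2 x * f (clip (p x / q2 x) lo hi))"
    using F1(1) F2(1) q1i q2i int_q1 int_q2 by simp
  then show ?thesis using F1(2) F2(2) by (simp add: p_def q1_def q2_def g_def)
qed

end
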